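(* For all integers $n, m, k \ge 0$, the map $\phi$ defined below restricts to a bijection from the set of Dyck paths of semilength $n$ with $m$ contacts and $k$ up-steps at odd height onto the set of Dyck paths of semilength $n$ with $m$ contacts and $k$ peaks. Definition of $\phi:\mathcal D\to\mathcal D$ (on Dyck words): $\phi(\epsilon)=\epsilon$ for the empty word $\epsilon$. A nonempty Dyck word $W$ whose path has $s\ge 0$ down-steps at height $2$ before its first contact decomposes uniquely as $W = U\big(\prod_{i=1}^{s} U W_i D\big) D W_{s+1}$ with each $W_i$ a Dyck word, and then $$\phi(W) = \Big(\prod_{i=1}^{s} U\,\phi(W_i)\Big)\, U D\, D^{s}\, \phi(W_{s+1}).$$
   Context: Paths have steps $(1,1)$ (up-step, letter $U$) and $(1,-1)$ (down-step, letter $D$), start at $(0,0)$; paths and words in $\{U,D\}$ are identified. A Dyck path is such a path ending on the line $y=0$ with no vertex of negative $y$-coordinate; a Dyck word is the corresponding word (equal numbers of $U$ and $D$, no prefix with more $D$s than $U$s). $\mathcal D$ denotes the set of Dyck paths/words. The semilength of a path is half its number of steps. An up-step is at height $j$ if it goes from $(i-1,j-1)$ to $(i,j)$; a down-step is at height $j$ if it goes from $(i,j)$ to $(i+1,j-1)$; a step is at odd height if $j$ is odd. A peak is an up-step immediately followed by a down-step. A contact is a down-step at height $1$ or an up-step at height $0$. Products $\prod$ denote concatenation of words, $D^s$ is $s$ copies of $D$. *)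

theory Defs
  imports Main
begin

datatype step = U | D

type_synonym word = "step list"

definition ht :: "word \<Rightarrow> int" where
  "ht w = int (length (filter (\<lambda>x. x = U) w)) - int (length (filter (\<lambda>x. x = D) w))"

definition dyck :: "word \<Rightarrow> bool" where
  "dyck w \<longleftrightarrow> ht w = 0 \<and> (\<forall>i \<le> length w. ht (take i w) \<ge> 0)"

definition semilength :: "word \<Rightarrow> nat" where
  "semilength w = length w div 2"

text \<open>The step at position i (0-based) ends at height ht (take (Suc i) w).
  An up-step is at height j if it ends at height j; a down-step is at height j
  if it starts at height j, i.e. ends at height j - 1.\<close>
definition contacts :: "word \<Rightarrow> nat" where
  "contacts w = card {i. i < length w \<and>
      ((w ! i = D \<and> ht (take (Suc i) w) = 0) \<or> (w ! i = U \<and> ht (take (Suc i) w) = 0))}"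

definition odd_ups :: "word \<Rightarrow> nat" where
  "odd_ups w = card {i. i < length w \<and> w ! i = U \<and> odd (ht (take (Suc i) w))}"

definition peaks :: "word \<Rightarrow> nat" where
  "peaks w = card {i. Suc i < length w \<and> w ! i = U \<and> w ! Suc i = D}"

text \<open>fr h w: reading w starting at height h \<ge> 1, the number of steps read before
  the first down-step that goes from height 1 to 0.\<close>
fun fr :: "nat \<Rightarrow> word \<Rightarrow> nat" where
  "fr h [] = 0"
| "fr h (U # w) = Suc (fr (Suc h) w)"
| "fr 0 (D # w) = 0"
| "fr (Suc 0) (D # w) = 0"
| "fr (Suc (Suc h)) (D # w) = Suc (fr (Suc h) w)"

lemma fr_le: "fr h w \<le> length w"
  by (induction h w rule: fr.induct) auto

text \<open>For a Dyck word U # r, with n = fr 1 r, we have U # r = U A D W' where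
  A = take n r and W' = drop (Suc n) r are Dyck words.  The inner word A decomposes
  into primes A = prod_{i=1}^s U W_i D, where s is the number of down-steps at height 2
  before the first contact.  phi_seq A computes prod_{i=1}^s U phi(W_i).\<close>
function phi :: "word \<Rightarrow> word" and phi_seq :: "word \<Rightarrow> word" where
  "phi [] = []"
| "phi (D # r) = []"
| "phi (U # r) =
     (let n = fr 1 r; A = take n r; W' = drop (Suc n) r
      in phi_seq A @ [U, D] @ replicate (contacts A) D @ phi W')"
| "phi_seq [] = []"
| "phi_seq (D # r) = []"
| "phi_seq (U # r) =
     (let n = fr 1 r in U # phi (take n r) @ phi_seq (drop (Suc n) r))"
  by pat_completeness auto
termination
  by (relation "measure (case_sum length length)")
     (auto simp: Let_def less_Suc_eq_le fr_le)

end

theory Submission imports Defs begin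

fun sv :: "step \<Rightarrow> int" where "sv U = 1" | "sv D = -1"

lemma ht_Nil[simp]: "ht [] = 0" by (simp add: ht_def)
lemma ht_Cons[simp]: "ht (x # w) = sv x + ht w"
  by (cases x) (auto simp: ht_def)
lemma ht_append[simp]: "ht (xs @ ys) = ht xs + ht ys"
  by (induction xs) auto
lemma ht_rep[simp]: "ht (replicate n D) = - int n"
  by (induction n) auto

fun nn :: "int \<Rightarrow> word \<Rightarrow> bool" where
  "nn h [] = (0 \<le> h)"
| "nn h (x # w) = (0 \<le> h \<and> nn (h + sv x) w)"

fun z :: "int \<Rightarrow> word \<Rightarrow> nat" where
  "z h [] = 0"
| "z h (x # w) = (if h + sv x = 0 then 1 else 0) + z (h + sv x) w"

fun ou :: "int \<Rightarrow> word \<Rightarrow> nat" where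
  "ou h [] = 0"
| "ou h (x # w) = (if x = U \<and> odd (h + 1) then 1 else 0) + ou (h + sv x) w"

lemma nn_ge0: "nn h w \<Longrightarrow> 0 \<le> h" by (cases w) auto

lemma nn_append: "nn h (xs @ ys) \<longleftrightarrow> nn h xs \<and> nn (h + ht xs) ys"
  by (induction xs arbitrary: h) (auto simp: nn_ge0 add.assoc)

lemma nn_mono: "nn h w \<Longrightarrow> h \<le> h' \<Longrightarrow> nn h' w"
  by (induction w arbitrary: h h') fastforce+

lemma z_append: "z h (xs @ ys) = z h xs + z (h + ht xs) ys"
  by (induction xs arbitrary: h) (auto simp: add.assoc)

lemma ou_append: "ou h (xs @ ys) = ou h xs + ou (h + ht xs) ys"
  by (induction xs arbitrary: h) (auto simp: add.assoc)

lemma ou_shift2: "ou (h + 2) w = ou h w"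
proof (induction w arbitrary: h)
  case (Cons x w)
  have "h + 2 + sv x = (h + sv x) + 2" by simp
  then show ?case using Cons[of "h + sv x"] by (simp add: ac_simps)
qed simp

lemma z_zero: "nn (h - 1) w \<Longrightarrow> 1 \<le> h \<Longrightarrow> z h w = 0"
proof (induction w arbitrary: h)
  case (Cons x w)
  have "nn (h + sv x - 1) w" using Cons.prems by (simp add: algebra_simps)
  moreover have "1 \<le> h + sv x" using Cons.prems nn_ge0[OF calculation] by simp
  ultimately show ?case using Cons.IH[of "h + sv x"] by simp
qed simp

lemma nn_z_drop: "1 \<le> h \<Longrightarrow> nn h w \<Longrightarrow> z h w = 0 \<Longrightarrow> nn (h - 1) w"
proof (induction w arbitrary: h)
  case (Cons x w)
  have "nn (h + sv x) w" "h + sv x \<noteq> 0" using Cons.prems by (auto split: if_splits)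
  moreover have "z (h + sv x) w = 0" using Cons.prems by (auto split: if_splits)
  ultimately have "nn (h + sv x - 1) w" using Cons.IH nn_ge0 by force
  then show ?case using Cons.prems by (simp add: algebra_simps)
qed simp

lemma nn_rep: "nn (int j) (replicate j D)"
  by (induction j) auto

lemma z_rep: "z (int j) (replicate j D) = (if j = 0 then 0 else 1)"
  by (induction j) auto

lemma z_peak: "z (int s) (U # D # replicate s D) = 1"
  using z_rep[of s] by simp

lemma z_pos: "ht T = 0 \<Longrightarrow> T \<noteq> [] \<Longrightarrow> 0 < z 0 T"
proof -
  assume a: "ht T = 0" "T \<noteq> []"
  then obtain T0 x where T: "T = T0 @ [x]" by (metis rev_exhaust)
  then have "ht T0 + sv x = 0" using a by simp
  then show ?thesis using T by (simp add: z_append)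
qed

lemma nn0_hd: "nn 0 w \<Longrightarrow> w \<noteq> [] \<Longrightarrow> hd w = U"
  by (cases w) (auto, case_tac a, auto dest: nn_ge0)

lemma card_less_Suc: "card {i. i < Suc n \<and> P i} = (if P 0 then 1 else 0) + card {i. i < n \<and> P (Suc i)}"
proof -
  have e: "{i. i < Suc n \<and> P i} = {i. i = 0 \<and> P 0} \<union> Suc ` {i. i < n \<and> P (Suc i)}"
    by (auto simp: less_Suc_eq_0_disj)
  have "card ({i. i = 0 \<and> P 0} \<union> Suc ` {i. i < n \<and> P (Suc i)}) =
        card {i::nat. i = 0 \<and> P 0} + card (Suc ` {i. i < n \<and> P (Suc i)})"
    by (subst card_Un_disjoint) auto
  moreover have "card (Suc ` {i. i < n \<and> P (Suc i)}) = card {i. i < n \<and> P (Suc i)}"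
    by (rule card_image) auto
  moreover have "card {i::nat. i = 0 \<and> P 0} = (if P 0 then 1 else 0)" by auto
  ultimately show ?thesis using e by simp
qed

lemma z_card: "card {i. i < length w \<and> h + ht (take (Suc i) w) = 0} = z h w"
proof (induction w arbitrary: h)
  case (Cons x w)
  have "{i. i < length w \<and> h + ht (take (Suc (Suc i)) (x # w)) = 0}
      = {i. i < length w \<and> (h + sv x) + ht (take (Suc i) w) = 0}" by (auto simp: algebra_simps)
  then show ?case using Cons[of "h + sv x"] by (simp only: length_Cons card_less_Suc) simp
qed simp

lemma contacts_z: "contacts w = z 0 w"
proof -
  have "{i. i < length w \<and> ((w ! i = D \<and> ht (take (Suc i) w) = 0) \<or> (w ! i = U \<and> ht (take (Suc i) w) = 0))}
    = {i. i < length w \<and> 0 + ht (take (Suc i) w) = 0}"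
    by (auto; case_tac "w ! x"; auto)
  then show ?thesis unfolding contacts_def using z_card[of w 0] by simp
qed

lemma ou_card: "card {i. i < length w \<and> w ! i = U \<and> odd (h + ht (take (Suc i) w))} = ou h w"
proof (induction w arbitrary: h)
  case (Cons x w)
  have "{i. i < length w \<and> (x # w) ! Suc i = U \<and> odd (h + ht (take (Suc (Suc i)) (x # w)))}
      = {i. i < length w \<and> w ! i = U \<and> odd ((h + sv x) + ht (take (Suc i) w))}" by (auto simp: algebra_simps)
  moreover have "(x = U \<and> odd (h + sv x)) = (x = U \<and> odd (h + 1))" by (cases x) auto
  ultimately show ?case using Cons[of "h + sv x"] by (simp only: length_Cons card_less_Suc) simp
qed simp

lemma odd_ups_ou: "odd_ups w = ou 0 w"
  using ou_card[of w 0] unfolding odd_ups_def by simp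

lemma peaks_Nil[simp]: "peaks [] = 0" by (simp add: peaks_def)

lemma peaks_Cons: "peaks (x # w) = (if w \<noteq> [] \<and> x = U \<and> hd w = D then 1 else 0) + peaks w"
proof -
  have "\<And>v. peaks v = card {i. i < length v \<and> (Suc i < length v \<and> v ! i = U \<and> v ! Suc i = D)}"
    unfolding peaks_def by (rule arg_cong[where f=card]) auto
  moreover have "{i. i < length w \<and> (Suc (Suc i) < length (x # w) \<and> (x # w) ! Suc i = U \<and> (x # w) ! Suc (Suc i) = D)}
     = {i. i < length w \<and> (Suc i < length w \<and> w ! i = U \<and> w ! Suc i = D)}" by auto
  moreover have "(Suc 0 < length (x # w) \<and> (x # w) ! 0 = U \<and> (x # w) ! Suc 0 = D) = (w \<noteq> [] \<and> x = U \<and> hd w = D)"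
    by (cases w) auto
  ultimately show ?thesis by (simp only: length_Cons card_less_Suc, simp?)
qed

lemma peaks_append: "peaks (xs @ ys) = peaks xs + peaks ys +
   (if xs \<noteq> [] \<and> ys \<noteq> [] \<and> last xs = U \<and> hd ys = D then 1 else 0)"
  by (induction xs) (auto simp: peaks_Cons)

lemma peaks_D: "peaks (D # w) = peaks w" by (simp add: peaks_Cons)
lemma peaks_rep: "peaks (replicate s D @ w) = peaks w"
  by (induction s) (auto simp: peaks_D)


inductive dk :: "word \<Rightarrow> bool" where
  dk_nil: "dk []"
| dk_cons: "dk A \<Longrightarrow> dk B \<Longrightarrow> dk (U # A @ D # B)"

lemma dk_props: "dk w \<Longrightarrow> ht w = 0 \<and> nn 0 w"
proof (induction rule: dk.induct)
  case (dk_cons A B)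
  then have "nn 1 A" using nn_mono by fastforce
  then show ?case using dk_cons by (simp add: nn_append)
qed simp

lemma nn_iff: "nn h w \<longleftrightarrow> (\<forall>i \<le> length w. 0 \<le> h + ht (take i w))"
proof (induction w arbitrary: h)
  case Nil then show ?case by simp
next
  case (Cons x w)
  have "(\<forall>i \<le> length (x # w). 0 \<le> h + ht (take i (x # w))) \<longleftrightarrow>
        0 \<le> h \<and> (\<forall>i \<le> length w. 0 \<le> h + ht (take (Suc i) (x # w)))"
    by (auto simp del: take_Suc_Cons) (metis Suc_le_mono not0_implies_Suc take_0 ht_Nil add_0_right le_zero_eq)+
  also have "\<dots> \<longleftrightarrow> 0 \<le> h \<and> (\<forall>i \<le> length w. 0 \<le> (h + sv x) + ht (take i w))"
    by (simp add: add.assoc)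
  finally show ?case using Cons[of "h + sv x"] by simp
qed

lemma dyck_nn: "dyck w \<longleftrightarrow> ht w = 0 \<and> nn 0 w"
  unfolding dyck_def using nn_iff[of 0 w] by simp

lemma first_return:
  "1 \<le> h \<Longrightarrow> nn h r \<Longrightarrow> h + ht r = 0 \<Longrightarrow>
   \<exists>A B. r = A @ D # B \<and> nn (h - 1) A \<and> h + ht A = 1 \<and> nn 0 B \<and> ht B = 0"
proof (induction r arbitrary: h)
  case Nil then show ?case by simp
next
  case (Cons x r)
  show ?case
  proof (cases x)
    case U
    with Cons.prems have "1 \<le> h + 1" "nn (h + 1) r" "h + 1 + ht r = 0" by (auto simp: algebra_simps)
    from Cons.IH[OF this] obtain A B where "r = A @ D # B" "nn h A" "h + 1 + ht A = 1" "nn 0 B" "ht B = 0"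
      by auto
    then show ?thesis using U Cons.prems
      by (intro exI[of _ "U # A"] exI[of _ B]) auto
  next
    case D
    show ?thesis
    proof (cases "h = 1")
      case True
      then show ?thesis using D Cons.prems
        by (intro exI[of _ "[]"] exI[of _ r]) auto
    next
      case False
      with D Cons.prems have "1 \<le> h - 1" "nn (h - 1) r" "h - 1 + ht r = 0" by (auto simp: algebra_simps)
      from Cons.IH[OF this] obtain A B where "r = A @ D # B" "nn (h - 1 - 1) A" "h - 1 + ht A = 1" "nn 0 B" "ht B = 0"
        by auto
      then show ?thesis using D Cons.prems
        by (intro exI[of _ "D # A"] exI[of _ B]) auto
    qed
  qed
qed

lemma dyck_dk: "ht w = 0 \<Longrightarrow> nn 0 w \<Longrightarrow> dk w"
proof (induction "length w" arbitrary: w rule: less_induct)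
  case less
  show ?case
  proof (cases w)
    case Nil then show ?thesis by (simp add: dk_nil)
  next
    case (Cons x r)
    show ?thesis
    proof (cases x)
      case D then show ?thesis using less.prems Cons by (auto dest: nn_ge0)
    next
      case U
      with less.prems Cons have "1 \<le> (1::int)" "nn 1 r" "1 + ht r = 0" by auto
      from first_return[OF this] obtain A B where AB: "r = A @ D # B" "nn 0 A" "ht A = 0" "nn 0 B" "ht B = 0"
        by auto
      have "dk A" using less.hyps AB Cons by auto
      moreover have "dk B" using less.hyps AB Cons by auto
      ultimately show ?thesis using Cons U AB dk_cons by auto
    qed
  qed
qed

lemma dyck_iff_dk: "dyck w \<longleftrightarrow> dk w"
  using dyck_dk dk_props dyck_nn by blast

lemma fr_dk: "dk A \<Longrightarrow> fr (Suc h) (A @ v) = length A + fr (Suc h) v"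
proof (induction arbitrary: h v rule: dk.induct)
  case (dk_cons A B)
  show ?case using dk_cons.IH(1)[of "Suc h" "D # B @ v"] dk_cons.IH(2)[of h v] by simp
qed simp

lemma phi_eq: "dk A \<Longrightarrow> phi (U # A @ D # B) = phi_seq A @ [U, D] @ replicate (z 0 A) D @ phi B"
proof -
  assume a: "dk A"
  have "fr 1 (A @ D # B) = length A" using fr_dk[OF a, of 0 "D # B"] by simp
  then show ?thesis by (simp add: Let_def contacts_z)
qed

lemma phi_seq_eq: "dk A \<Longrightarrow> phi_seq (U # A @ D # B) = U # phi A @ phi_seq B"
proof -
  assume a: "dk A"
  have "fr 1 (A @ D # B) = length A" using fr_dk[OF a, of 0 "D # B"] by simp
  then show ?thesis by (simp add: Let_def)
qed

lemma z_dk_cons: "dk A \<Longrightarrow> z 0 (U # A @ D # B) = Suc (z 0 B)"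
proof -
  assume a: "dk A"
  then have "z 1 A = 0" using dk_props z_zero[of 1 A] by simp
  then show ?thesis using dk_props[OF a] by (simp add: z_append)
qed


lemma ou_dk_cons: "dk A \<Longrightarrow> ou h (U # A @ D # B) = (if even h then 1 else 0) + ou (h + 1) A + ou h B"
  using dk_props[of A] by (simp add: ou_append)

lemma PQ: "dk w \<Longrightarrow>
   (nn 0 (phi w) \<and> ht (phi w) = 0 \<and> length (phi w) = length w \<and> z 0 (phi w) = z 0 w \<and> peaks (phi w) = ou 0 w) \<and>
   (nn 0 (phi_seq w) \<and> z 0 (phi_seq w) = 0 \<and> ht (phi_seq w) = int (z 0 w) \<and>
    length (phi_seq w) + z 0 w = length w \<and> peaks (phi_seq w) = ou 1 w)"
proof (induction rule: dk.induct)
  case dk_nil then show ?case by simp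
next
  case (dk_cons A B)
  define s where "s = z 0 A"
  have pw: "phi (U # A @ D # B) = phi_seq A @ (U # D # replicate s D @ phi B)"
    using phi_eq[OF dk_cons.hyps(1)] s_def by simp
  have psw: "phi_seq (U # A @ D # B) = U # (phi A @ phi_seq B)"
    using phi_seq_eq[OF dk_cons.hyps(1)] by simp
  have zw: "z 0 (U # A @ D # B) = Suc (z 0 B)" by (rule z_dk_cons[OF dk_cons.hyps(1)])
  have ouw0: "ou 0 (U # A @ D # B) = 1 + ou 1 A + ou 0 B" using ou_dk_cons[OF dk_cons.hyps(1), of 0 B] by simp
  have ouw1: "ou 1 (U # A @ D # B) = ou 0 A + ou 1 B" using ou_dk_cons[OF dk_cons.hyps(1), of 1 B]
    ou_shift2[of 0 A] by simp
  have hsA: "ht (phi_seq A) = int s" using dk_cons.IH s_def by simp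
  have nrep: "nn (int s) (replicate s D)" by (rule nn_rep)
  have p1: "nn 0 (phi (U # A @ D # B))"
    unfolding pw using dk_cons.IH hsA nrep by (simp add: nn_append)
  have p2: "ht (phi (U # A @ D # B)) = 0" unfolding pw using hsA dk_cons.IH by simp
  have p3: "length (phi (U # A @ D # B)) = length (U # A @ D # B)" unfolding pw using dk_cons.IH s_def by simp
  have "z (int s) (U # D # replicate s D @ phi B) = z (int s) (U # D # replicate s D) + z 0 (phi B)"
    using z_append[of "int s" "U # D # replicate s D" "phi B"] by simp
  then have p4: "z 0 (phi (U # A @ D # B)) = z 0 (U # A @ D # B)"
    unfolding pw zw using z_append[of 0 "phi_seq A"] hsA dk_cons.IH z_peak[of s] by simp
  have p5: "peaks (phi (U # A @ D # B)) = ou 0 (U # A @ D # B)"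
    unfolding pw ouw0 using dk_cons.IH peaks_append[of "phi_seq A"] peaks_rep[of s "phi B"]
    by (simp add: peaks_Cons)
  have q1: "nn 0 (phi_seq (U # A @ D # B))" unfolding psw using dk_cons.IH
    by (simp add: nn_append) (meson nn_mono zero_le_one)
  have q2: "z 0 (phi_seq (U # A @ D # B)) = 0" unfolding psw using dk_cons.IH
    by (simp add: z_append z_zero)
  have q3: "ht (phi_seq (U # A @ D # B)) = int (z 0 (U # A @ D # B))" unfolding psw zw using dk_cons.IH by simp
  have q4: "length (phi_seq (U # A @ D # B)) + z 0 (U # A @ D # B) = length (U # A @ D # B)"
    unfolding psw zw using dk_cons.IH by simp
  have hd1: "phi A @ phi_seq B = [] \<or> hd (phi A @ phi_seq B) = U"
  proof (cases "phi A")
    case Nil then show ?thesis using dk_cons.IH nn0_hd by auto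
  next
    case (Cons a l) then show ?thesis using dk_cons.IH nn0_hd[of "phi A"] by auto
  qed
  have hd2: "phi_seq B = [] \<or> hd (phi_seq B) = U" using dk_cons.IH nn0_hd by blast
  have q5: "peaks (phi_seq (U # A @ D # B)) = ou 1 (U # A @ D # B)"
    unfolding psw ouw1 using dk_cons.IH hd1 hd2 peaks_append[of "phi A" "phi_seq B"]
    by (auto simp: peaks_Cons)
  show ?case using p1 p2 p3 p4 p5 q1 q2 q3 q4 q5 by blast
qed


lemma rep_U_eq: "replicate a D @ U # Y = replicate b D @ U # Y' \<Longrightarrow> a = b \<and> Y = Y'"
  by (induction a arbitrary: b) (case_tac b; auto)+

lemma last_U_eq: "X @ U # replicate a D = X' @ U # replicate b D \<Longrightarrow> X = X' \<and> a = b"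
proof -
  assume "X @ U # replicate a D = X' @ U # replicate b D"
  then have "rev (X @ U # replicate a D) = rev (X' @ U # replicate b D)" by simp
  then have "replicate a D @ U # rev X = replicate b D @ U # rev X'" by simp
  then show ?thesis using rep_U_eq by blast
qed

lemma uniq1: "P @ R = P' @ R' \<Longrightarrow> ht P = 0 \<Longrightarrow> ht P' = 0 \<Longrightarrow> z 0 P = z 0 P' \<Longrightarrow> P = P' \<and> R = R'"
proof -
  assume a: "P @ R = P' @ R'" "ht P = 0" "ht P' = 0" "z 0 P = z 0 P'"
  from a(1) obtain us where "(P = P' @ us \<and> R' = us @ R) \<or> (P @ us = P' \<and> R = us @ R')"
    by (auto simp: append_eq_append_conv2)
  then show ?thesis
  proof
    assume b: "P = P' @ us \<and> R' = us @ R"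
    then have "ht us = 0" "z 0 us = 0" using a by (auto simp: z_append)
    then have "us = []" using z_pos by fastforce
    then show ?thesis using b by simp
  next
    assume b: "P @ us = P' \<and> R = us @ R'"
    then have "ht us = 0" "z 0 us = 0" using a by (auto simp: z_append)
    then have "us = []" using z_pos by fastforce
    then show ?thesis using b by simp
  qed
qed

lemma uniq2: "P @ R = P' @ R' \<Longrightarrow> ht P = 0 \<Longrightarrow> ht P' = 0 \<Longrightarrow> z 0 R = 0 \<Longrightarrow> z 0 R' = 0 \<Longrightarrow> P = P' \<and> R = R'"
proof -
  assume a: "P @ R = P' @ R'" "ht P = 0" "ht P' = 0" "z 0 R = 0" "z 0 R' = 0"
  from a(1) obtain us where "(P = P' @ us \<and> R' = us @ R) \<or> (P @ us = P' \<and> R = us @ R')"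
    by (auto simp: append_eq_append_conv2)
  then show ?thesis
  proof
    assume b: "P = P' @ us \<and> R' = us @ R"
    then have "ht us = 0" "z 0 us = 0" using a by (auto simp: z_append)
    then have "us = []" using z_pos by fastforce
    then show ?thesis using b by simp
  next
    assume b: "P @ us = P' \<and> R = us @ R'"
    then have "ht us = 0" "z 0 us = 0" using a by (auto simp: z_append)
    then have "us = []" using z_pos by fastforce
    then show ?thesis using b by simp
  qed
qed

lemma phi_nonempty: "dk w \<Longrightarrow> w \<noteq> [] \<Longrightarrow> phi w \<noteq> []"
  using PQ[of w] by auto

lemma inj_both: "dk w \<Longrightarrow> (\<forall>w'. dk w' \<longrightarrow> phi w' = phi w \<longrightarrow> w' = w) \<and>
                          (\<forall>w'. dk w' \<longrightarrow> phi_seq w' = phi_seq w \<longrightarrow> w' = w)"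
proof (induction rule: dk.induct)
  case dk_nil
  show ?case
  proof (intro conjI allI impI)
    fix w' assume "dk w'" "phi w' = phi []"
    then show "w' = []" using phi_nonempty by fastforce
  next
    fix w' assume "dk w'" "phi_seq w' = phi_seq []"
    then show "w' = []" by cases (auto simp: Let_def)
  qed
next
  case (dk_cons A B)
  show ?case
  proof (intro conjI allI impI)
    fix w' assume w': "dk w'" "phi w' = phi (U # A @ D # B)"
    from w'(1) show "w' = U # A @ D # B"
    proof cases
      case dk_nil then show ?thesis using w' phi_nonempty[OF dk.dk_cons[OF dk_cons.hyps]] by auto
    next
      case (dk_cons A' B')
      define s where "s = z 0 A"
      define s' where "s' = z 0 A'"
      have e: "(phi_seq A' @ U # replicate (Suc s') D) @ phi B' = (phi_seq A @ U # replicate (Suc s) D) @ phi B"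
      proof -
        have h1: "phi w' = phi_seq A' @ [U,D] @ replicate s' D @ phi B'"
          using phi_eq[OF dk_cons(2)] dk_cons(1) s'_def by simp
        have h2: "phi (U # A @ D # B) = phi_seq A @ [U,D] @ replicate s D @ phi B"
          using phi_eq[OF dk_cons.hyps(1)] s_def by simp
        show ?thesis using h1 h2 w'(2) by simp
      qed
      have PA: "ht (phi_seq A) = int s" "z 0 (phi_seq A) = 0" using PQ[OF \<open>dk A\<close>] s_def by auto
      have PA': "ht (phi_seq A') = int s'" "z 0 (phi_seq A') = 0" using PQ[OF \<open>dk A'\<close>] s'_def by auto
      have "z (int s) (U # replicate (Suc s) D) = 1" using z_peak[of s] by simp
      moreover have "z (int s') (U # replicate (Suc s') D) = 1" using z_peak[of s'] by simp
      ultimately have "phi_seq A' @ U # replicate (Suc s') D = phi_seq A @ U # replicate (Suc s) D \<and> phi B' = phi B"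
        using uniq1[OF e] PA PA' by (simp add: z_append)
      then have "phi_seq A' = phi_seq A" "phi B' = phi B" using last_U_eq by blast+
      then show ?thesis using dk_cons.IH dk_cons by auto
    qed
  next
    fix w' assume w': "dk w'" "phi_seq w' = phi_seq (U # A @ D # B)"
    from w'(1) show "w' = U # A @ D # B"
    proof cases
      case dk_nil then show ?thesis using w' by (simp add: Let_def)
    next
      case (dk_cons A' B')
      have e: "phi A' @ phi_seq B' = phi A @ phi_seq B"
      proof -
        have h1: "phi_seq w' = U # phi A' @ phi_seq B'"
          using phi_seq_eq[OF dk_cons(2)] dk_cons(1) by simp
        have h2: "phi_seq (U # A @ D # B) = U # phi A @ phi_seq B"
          using phi_seq_eq[OF dk_cons.hyps(1)] by simp
        show ?thesis using h1 h2 w'(2) by simp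
      qed
      have "phi A' = phi A \<and> phi_seq B' = phi_seq B"
        using uniq2[OF e] PQ[OF \<open>dk A\<close>] PQ[OF \<open>dk A'\<close>] PQ[OF \<open>dk B\<close>] PQ[OF \<open>dk B'\<close>] by auto
      then show ?thesis using dk_cons.IH dk_cons by auto
    qed
  qed
qed

lemma last_U_decomp: "U \<in> set w \<Longrightarrow> \<exists>X t. w = X @ U # replicate t D"
proof (induction w rule: rev_induct)
  case Nil then show ?case by simp
next
  case (snoc x w)
  show ?case
  proof (cases x)
    case U then show ?thesis by (intro exI[of _ w] exI[of _ 0]) simp
  next
    case D
    then have "U \<in> set w" using snoc.prems by simp
    then obtain X t where "w = X @ U # replicate t D" using snoc.IH by blast
    then show ?thesis using D by (intro exI[of _ X] exI[of _ "Suc t"]) (simp add: replicate_append_same[symmetric])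
  qed
qed

lemma last_return_decomp: "nn 0 w \<Longrightarrow> \<exists>X R. w = X @ R \<and> ht X = 0 \<and> nn 0 X \<and> nn 0 R \<and> z 0 R = 0"
proof (induction w rule: rev_induct)
  case Nil then show ?case by (intro exI[of _ "[]"] exI[of _ "[]"]) simp
next
  case (snoc x w)
  then have "nn 0 w" by (simp add: nn_append)
  then obtain X R where XR: "w = X @ R" "ht X = 0" "nn 0 X" "nn 0 R" "z 0 R = 0" using snoc.IH by blast
  show ?case
  proof (cases "ht (R @ [x]) = 0")
    case True
    then show ?thesis using XR snoc.prems
      by (intro exI[of _ "X @ R @ [x]"] exI[of _ "[]"]) simp
  next
    case False
    have "nn 0 (R @ [x])" using snoc.prems XR by (simp add: nn_append)
    moreover have "z 0 (R @ [x]) = 0" using XR False by (simp add: z_append)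
    ultimately show ?thesis using XR
      by (intro exI[of _ X] exI[of _ "R @ [x]"]) simp
  qed
qed

lemma surj_both: "(dk v \<longrightarrow> (\<exists>w. dk w \<and> phi w = v)) \<and>
   (nn 0 v \<and> z 0 v = 0 \<longrightarrow> (\<exists>A. dk A \<and> phi_seq A = v))"
proof (induction "length v" arbitrary: v rule: less_induct)
  case less
  show ?case
  proof (intro conjI impI)
    assume "dk v"
    then show "\<exists>w. dk w \<and> phi w = v"
    proof cases
      case dk_nil then show ?thesis using dk.dk_nil by auto
    next
      case (dk_cons M B)
      define P where "P = U # M @ [D]"
      have vP: "v = P @ B" using dk_cons P_def by simp
      have "U \<in> set P" using P_def by simp
      then obtain Y t where Yt: "P = Y @ U # replicate t D" using last_U_decomp by blast
      have "t \<noteq> 0"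
      proof
        assume "t = 0"
        then have "last P = U" using Yt by simp
        then show False using P_def by simp
      qed
      then obtain s where ts: "t = Suc s" using not0_implies_Suc by blast
      have dP: "dk P" using P_def dk.dk_cons[OF dk_cons(2) dk.dk_nil] by simp
      have "ht P = 0" "nn 0 P" using dk_props[OF dP] by auto
      then have hY: "ht Y = int s" and nY: "nn 0 Y" using Yt ts by (auto simp: nn_append)
      have "z 0 P = 1" using P_def z_dk_cons[OF dk_cons(2), of "[]"] by simp
      moreover have "z 0 P = z 0 Y + 1" using Yt ts hY z_peak[of s] by (simp add: z_append)
      ultimately have zY: "z 0 Y = 0" by simp
      have "length Y < length v" using Yt vP by simp
      then obtain A where A: "dk A" "phi_seq A = Y" using less.hyps nY zY by blast
      have sA: "z 0 A = s" using PQ[OF A(1)] A(2) hY by simp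
      have "length B < length v" using vP P_def by simp
      then obtain w' where w': "dk w'" "phi w' = B" using less.hyps dk_cons by blast
      have "phi (U # A @ D # w') = v"
        using phi_eq[OF A(1), of w'] A sA w' vP Yt ts by simp
      then show ?thesis using dk.dk_cons[OF A(1) w'(1)] by blast
    qed
  next
    assume a: "nn 0 v \<and> z 0 v = 0"
    show "\<exists>A. dk A \<and> phi_seq A = v"
    proof (cases v)
      case Nil then show ?thesis using dk.dk_nil by (intro exI[of _ "[]"]) simp
    next
      case (Cons x Y')
      have xU: "x = U" using a Cons nn0_hd by fastforce
      then have "nn 1 Y'" "z 1 Y' = 0" using a Cons by (auto split: if_splits)
      then have "nn 0 Y'" using nn_z_drop[of 1 Y'] by simp
      then obtain X R where XR: "Y' = X @ R" "ht X = 0" "nn 0 X" "nn 0 R" "z 0 R = 0"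
        using last_return_decomp by blast
      have dX: "dk X" using dyck_dk XR by blast
      obtain w0 where w0: "dk w0" "phi w0 = X" using less.hyps[of X] dX XR Cons by fastforce
      obtain A1 where A1: "dk A1" "phi_seq A1 = R" using less.hyps[of R] XR Cons by fastforce
      have "phi_seq (U # w0 @ D # A1) = v" using phi_seq_eq[OF w0(1)] w0 A1 XR Cons xU by simp
      then show ?thesis using dk.dk_cons[OF w0(1) A1(1)] by blast
    qed
  qed
qed

theorem theorem1:
  fixes n m k :: nat
  shows "bij_betw phi
     {w. dyck w \<and> semilength w = n \<and> contacts w = m \<and> odd_ups w = k}
     {w. dyck w \<and> semilength w = n \<and> contacts w = m \<and> peaks w = k}"
  unfolding bij_betw_def
proof (intro conjI)
  show "inj_on phi {w. dyck w \<and> semilength w = n \<and> contacts w = m \<and> odd_ups w = k}"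
    by (rule inj_onI) (use inj_both dyck_iff_dk in blast)
  have fwd: "dk w \<Longrightarrow> dyck (phi w) \<and> semilength (phi w) = semilength w \<and> contacts (phi w) = contacts w
      \<and> peaks (phi w) = odd_ups w" for w
    using PQ[of w] by (simp add: dyck_nn semilength_def contacts_z odd_ups_ou)
  show "phi ` {w. dyck w \<and> semilength w = n \<and> contacts w = m \<and> odd_ups w = k} =
        {w. dyck w \<and> semilength w = n \<and> contacts w = m \<and> peaks w = k}"
  proof
    show "phi ` {w. dyck w \<and> semilength w = n \<and> contacts w = m \<and> odd_ups w = k} \<subseteq>
        {w. dyck w \<and> semilength w = n \<and> contacts w = m \<and> peaks w = k}"
      using fwd dyck_iff_dk by auto
  next
    show "{w. dyck w \<and> semilength w = n \<and> contacts w = m \<and> peaks w = k} \<subseteq>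
      phi ` {w. dyck w \<and> semilength w = n \<and> contacts w = m \<and> odd_ups w = k}"
    proof
      fix v assume "v \<in> {w. dyck w \<and> semilength w = n \<and> contacts w = m \<and> peaks w = k}"
      then have v: "dk v" "semilength v = n" "contacts v = m" "peaks v = k" using dyck_iff_dk by auto
      obtain w where w: "dk w" "phi w = v" using surj_both v(1) by blast
      then have "w \<in> {w. dyck w \<and> semilength w = n \<and> contacts w = m \<and> odd_ups w = k}"
        using fwd[OF w(1)] v dyck_iff_dk by auto
      then show "v \<in> phi ` {w. dyck w \<and> semilength w = n \<and> contacts w = m \<and> odd_ups w = k}"
        using w by blast
    qed
  qed
qed

end
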